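(* Let $y$ be a string whose last character occurs nowhere else in $y$, and let $\mathrm{BT}(y)$ be the trie consisting only of the black nodes of $\mathrm{AST}(y)$ (i.e., the trie of the set $\mathcal{R}$). Then every leaf $\ell$ of $\mathrm{BT}(y)$ is a node of the suffix tree $\mathrm{ST}(y)$, i.e., $\ell\in\mathcal{L}$.
   Context: $\mathrm{Substr}(y)$ is the set of substrings of $y$. $\mathrm{BegPos}(x)=\{i\mid y[i..i+|x|-1]=x\}$, $\mathrm{EndPos}(x)=\{i\mid y[i-|x|+1..i]=x\}$. For $x\in\mathrm{Substr}(y)$, $\overrightarrow{x}$ is the longest $z$ with $\mathrm{BegPos}(z)=\mathrm{BegPos}(x)$ and $\overleftarrow{x}$ is the longest $z$ with $\mathrm{EndPos}(z)=\mathrm{EndPos}(x)$. $\mathcal{L}=\{\overrightarrow{x}\mid x\in\mathrm{Substr}(y)\}$ is the node set of the suffix tree $\mathrm{ST}(y)$, and $\mathcal{R}=\{\overleftarrow{x}\mid x\in\mathrm{Substr}(y)\}$. $\mathrm{AST}(y)$ is the rooted tree on node set $\mathcal{L}\cup\mathcal{R}$ in which the parent of each non-root node is its longest proper prefix in $\mathcal{L}\cup\mathcal{R}$; a node is black iff it belongs to $\mathcal{R}$. The set $\mathcal{R}$ is prefix-closed, and a leaf of $\mathrm{BT}(y)$ is an element of $\mathcal{R}$ that is not a proper prefix of any other element of $\mathcal{R}$. *)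

theory Defs
  imports Main "HOL-Library.Sublist"
begin

text \<open>Strings are lists; positions are 0-based.\<close>

definition Substr :: "'a list \<Rightarrow> 'a list set" where
  "Substr y = {x. \<exists>u v. y = u @ x @ v}"

definition BegPos :: "'a list \<Rightarrow> 'a list \<Rightarrow> nat set" where
  "BegPos y x = {i. i + length x \<le> length y \<and> take (length x) (drop i y) = x}"

text \<open>End positions, recorded as the (exclusive) index j with y[j-|x|..j-1] = x,
  i.e. the informal end position i = j-1 shifted by one (so that the empty string
  has a well-defined end position set).\<close>
definition EndPos :: "'a list \<Rightarrow> 'a list \<Rightarrow> nat set" where
  "EndPos y x = {j. length x \<le> j \<and> j \<le> length y \<and> take (length x) (drop (j - length x) y) = x}"

definition is_rext :: "'a list \<Rightarrow> 'a list \<Rightarrow> 'a list \<Rightarrow> bool" where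
  "is_rext y x z \<longleftrightarrow> BegPos y z = BegPos y x \<and>
     (\<forall>w. BegPos y w = BegPos y x \<longrightarrow> length w \<le> length z)"

definition is_lext :: "'a list \<Rightarrow> 'a list \<Rightarrow> 'a list \<Rightarrow> bool" where
  "is_lext y x z \<longleftrightarrow> EndPos y z = EndPos y x \<and>
     (\<forall>w. EndPos y w = EndPos y x \<longrightarrow> length w \<le> length z)"

text \<open>Node set of the suffix tree ST(y).\<close>
definition Lset :: "'a list \<Rightarrow> 'a list set" where
  "Lset y = {z. \<exists>x\<in>Substr y. is_rext y x z}"

text \<open>Black nodes (node set of BT(y)).\<close>
definition Rset :: "'a list \<Rightarrow> 'a list set" where
  "Rset y = {z. \<exists>x\<in>Substr y. is_lext y x z}"

definition BT_leaf :: "'a list \<Rightarrow> 'a list \<Rightarrow> bool" where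
  "BT_leaf y l \<longleftrightarrow> l \<in> Rset y \<and> \<not> (\<exists>r\<in>Rset y. strict_prefix l r)"

end

theory Submission
  imports Defs
begin

lemma BegPos_iff: "i \<in> BegPos y x \<longleftrightarrow> (\<exists>u v. y = u @ x @ v \<and> length u = i)"
proof
  assume "i \<in> BegPos y x"
  hence h: "i + length x \<le> length y" "take (length x) (drop i y) = x" by (auto simp: BegPos_def)
  have "y = take i y @ take (length x) (drop i y) @ drop (length x) (drop i y)"
    by (metis append_take_drop_id)
  moreover have "length (take i y) = i" using h(1) by simp
  ultimately show "\<exists>u v. y = u @ x @ v \<and> length u = i" using h(2) by metis
next
  assume "\<exists>u v. y = u @ x @ v \<and> length u = i"
  then show "i \<in> BegPos y x" by (auto simp: BegPos_def)
qed

lemma EndPos_iff: "j \<in> EndPos y x \<longleftrightarrow> (\<exists>u v. y = u @ x @ v \<and> length u + length x = j)"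
proof
  assume "j \<in> EndPos y x"
  hence h: "length x \<le> j" "j \<le> length y" "take (length x) (drop (j - length x) y) = x"
    by (auto simp: EndPos_def)
  have "j - length x \<in> BegPos y x" using h by (auto simp: BegPos_def)
  then show "\<exists>u v. y = u @ x @ v \<and> length u + length x = j"
    using h(1) unfolding BegPos_iff by auto
next
  assume "\<exists>u v. y = u @ x @ v \<and> length u + length x = j"
  then show "j \<in> EndPos y x" by (auto simp: EndPos_def)
qed

lemma end_suffix:
  assumes "u1 @ x1 @ v1 = u2 @ x2 @ v2" "length u1 + length x1 = length u2 + length x2"
    "length x1 \<le> length x2"
  shows "\<exists>s. x2 = s @ x1"
proof -
  have "u1 @ x1 = u2 @ x2"
  proof -
    have "take (length u1 + length x1) (u1 @ x1 @ v1) = u1 @ x1" by simp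
    moreover have "take (length u2 + length x2) (u2 @ x2 @ v2) = u2 @ x2" by simp
    ultimately show ?thesis using assms(1,2) by simp
  qed
  hence "suffix x1 (u2 @ x2)" by (metis suffix_def)
  moreover have "suffix x2 (u2 @ x2)" by (simp add: suffix_def)
  ultimately have "suffix x1 x2" using assms(3) by (rule suffix_length_suffix)
  then show ?thesis by (simp add: suffix_def)
qed

lemma beg_prefix:
  assumes "u1 @ x1 @ v1 = u2 @ x2 @ v2" "length u1 = length u2"
    "length x1 \<le> length x2"
  shows "\<exists>s. x2 = x1 @ s"
proof -
  have "x1 @ v1 = x2 @ v2"
  proof -
    have "drop (length u1) (u1 @ x1 @ v1) = x1 @ v1" by simp
    moreover have "drop (length u2) (u2 @ x2 @ v2) = x2 @ v2" by simp
    ultimately show ?thesis using assms(1,2) by simp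
  qed
  hence "prefix x1 (x2 @ v2)" by (metis prefix_def)
  moreover have "prefix x2 (x2 @ v2)" by simp
  ultimately have "prefix x1 x2" using assms(3) by (rule prefix_length_prefix)
  then show ?thesis by (simp add: prefix_def)
qed

theorem lemma5:
  fixes y :: "'a list" and l :: "'a list"
  assumes "y \<noteq> []"
    and "last y \<notin> set (butlast y)"
    and "BT_leaf y l"
  shows "l \<in> Lset y"
proof -
  have lR: "l \<in> Rset y" and leaf: "\<not> (\<exists>r\<in>Rset y. strict_prefix l r)"
    using assms(3) by (auto simp: BT_leaf_def)
  then obtain x where xS: "x \<in> Substr y" and eq: "EndPos y l = EndPos y x"
    and maxl: "\<And>w. EndPos y w = EndPos y l \<Longrightarrow> length w \<le> length l"
    by (auto simp: Rset_def is_lext_def)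
  from xS obtain u0 v0 where "y = u0 @ x @ v0" by (auto simp: Substr_def)
  hence "length u0 + length x \<in> EndPos y x" by (auto simp: EndPos_iff)
  then obtain j0 where j0: "j0 \<in> EndPos y l" using eq by auto
  then obtain u1 v1 where y1: "y = u1 @ l @ v1" and j0e: "length u1 + length l = j0"
    by (auto simp: EndPos_iff)
  have lS: "l \<in> Substr y" using y1 by (auto simp: Substr_def)
  have "is_rext y l l"
    unfolding is_rext_def
  proof (intro conjI allI impI refl)
    fix w assume wB: "BegPos y w = BegPos y l"
    show "length w \<le> length l"
    proof (rule ccontr)
      assume lw: "\<not> length w \<le> length l"
      have "length u1 \<in> BegPos y l" using y1 by (auto simp: BegPos_iff)
      hence "length u1 \<in> BegPos y w" using wB by simp
      then obtain u2 v2 where y2: "y = u2 @ w @ v2" "length u2 = length u1"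
        by (auto simp: BegPos_iff)
      have e12: "u1 @ l @ v1 = u2 @ w @ v2" using y1 y2(1) by simp
      have "length l \<le> length w" using lw by simp
      then obtain s where "w = l @ s" using beg_prefix[OF e12 y2(2)[symmetric]] by blast
      with lw obtain a w3 where wd: "w = l @ a # w3" by (cases s) auto
      have F: "j \<in> EndPos y l \<longleftrightarrow> Suc j \<in> EndPos y (l @ [a])" for j
      proof
        assume "j \<in> EndPos y l"
        then obtain u v where yy: "y = u @ l @ v" "length u + length l = j"
          by (auto simp: EndPos_iff)
        hence "length u \<in> BegPos y w" using wB by (auto simp: BegPos_iff)
        then obtain u' v' where "y = u' @ w @ v'" "length u' = length u"
          by (auto simp: BegPos_iff)
        hence "y = u' @ (l @ [a]) @ (w3 @ v')" "length u' + length (l @ [a]) = Suc j"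
          using wd yy(2) by auto
        then show "Suc j \<in> EndPos y (l @ [a])" unfolding EndPos_iff by blast
      next
        assume "Suc j \<in> EndPos y (l @ [a])"
        then obtain u v where "y = u @ (l @ [a]) @ v" "length u + length (l @ [a]) = Suc j"
          by (auto simp: EndPos_iff)
        hence "y = u @ l @ (a # v)" "length u + length l = j" by auto
        then show "j \<in> EndPos y l" unfolding EndPos_iff by blast
      qed
      have laS: "l @ [a] \<in> Substr y"
        using F[of j0] j0 by (auto simp: EndPos_iff Substr_def)
      have "is_lext y (l @ [a]) (l @ [a])"
        unfolding is_lext_def
      proof (intro conjI allI impI refl)
        fix v assume vE: "EndPos y v = EndPos y (l @ [a])"
        show "length v \<le> length (l @ [a])"
        proof (rule ccontr)
          assume lv: "\<not> length v \<le> length (l @ [a])"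
          have "Suc j0 \<in> EndPos y (l @ [a])" using F j0 by blast
          then obtain ua va where ya: "y = ua @ (l @ [a]) @ va"
            "length ua + length (l @ [a]) = Suc j0" by (auto simp: EndPos_iff)
          have "Suc j0 \<in> EndPos y v" using vE \<open>Suc j0 \<in> EndPos y (l @ [a])\<close> by simp
          then obtain ub vb where yb: "y = ub @ v @ vb" "length ub + length v = Suc j0"
            by (auto simp: EndPos_iff)
          obtain s where vs: "v = s @ (l @ [a])"
          proof -
            have e: "ua @ (l @ [a]) @ va = ub @ v @ vb" using ya(1) yb(1) by simp
            have e2: "length ua + length (l @ [a]) = length ub + length v" using ya(2) yb(2) by simp
            have "length (l @ [a]) \<le> length v" using lv by simp
            then show ?thesis using end_suffix[OF e e2] that by blast
          qed
          have "EndPos y (s @ l) = EndPos y l"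
          proof
            show "EndPos y (s @ l) \<subseteq> EndPos y l"
            proof
              fix j assume "j \<in> EndPos y (s @ l)"
              then obtain u v' where "y = u @ (s @ l) @ v'" "length u + length (s @ l) = j"
                by (auto simp: EndPos_iff)
              hence "y = (u @ s) @ l @ v'" "length (u @ s) + length l = j" by auto
              then show "j \<in> EndPos y l" unfolding EndPos_iff by blast
            qed
          next
            show "EndPos y l \<subseteq> EndPos y (s @ l)"
            proof
              fix j assume "j \<in> EndPos y l"
              hence "Suc j \<in> EndPos y v" using F vE by blast
              then obtain u v' where "y = u @ v @ v'" "length u + length v = Suc j"
                by (auto simp: EndPos_iff)
              hence "y = u @ (s @ l) @ (a # v')" "length u + length (s @ l) = j"
                using vs by auto
              then show "j \<in> EndPos y (s @ l)" unfolding EndPos_iff by blast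
            qed
          qed
          hence "length (s @ l) \<le> length l" using maxl by blast
          hence "s = []" by simp
          with lv vs show False by simp
        qed
      qed
      hence "l @ [a] \<in> Rset y" using laS by (auto simp: Rset_def)
      moreover have "strict_prefix l (l @ [a])" by (simp add: strict_prefix_def)
      ultimately show False using leaf by blast
    qed
  qed
  then show ?thesis using lS by (auto simp: Lset_def)
qed

end
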